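(* Let $K$ be a non-Archimedean local field, and for $n\ge1$ let $C_n$ and $S_n$ be the operators on $L^2(K)$ defined in the context. Then $C_n$ and $S_n$ commute, so the orthogonal projection $D_n$ onto $\mathcal D_n=\mathcal C_n\cap\mathcal S_n$ is given by $D_n=C_nS_n=S_nC_n$.
   Context: $K$ is a non-discrete, totally disconnected, locally compact field with canonical (ultrametric) absolute value $|\cdot|$, $O=\{x:|x|\le1\}$, $q$ the cardinality of the residue field, $\beta$ a uniformizer ($|\beta|=q^{-1}$), $B_n=\beta^{-n}O=\{x:|x|\le q^n\}$, and $dx$ the Haar measure with $\mu(O)=1$. $\mathcal C_n=\{f\in L^2(K): f=0\text{ a.e. outside }B_n\}$ with orthogonal projection $C_nf=\mathbf 1_{B_n}f$; $\mathcal S_n=\{f\in L^2(K): f(x+h)=f(x)\ \forall h\in B_{-n}\}$ with orthogonal projection $(S_nf)(x)=q^n\int_{B_{-n}}f(x+y)\,dy$. *)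

theory Defs
  imports "HOL-Analysis.Analysis"
begin

definition ring_of_integers :: "('a \<Rightarrow> real) \<Rightarrow> 'a set" where
  "ring_of_integers absv = {x. absv x \<le> 1}"

definition residue_rel :: "('a::ab_group_add \<Rightarrow> real) \<Rightarrow> ('a \<times> 'a) set" where
  "residue_rel absv = {(x, y). x \<in> ring_of_integers absv \<and> y \<in> ring_of_integers absv
                               \<and> absv (x - y) < 1}"

definition nonarch_local_field ::
  "('a::{field, metric_space} \<Rightarrow> real) \<Rightarrow> 'a measure \<Rightarrow> nat \<Rightarrow> 'a \<Rightarrow> bool" where
  "nonarch_local_field absv M q \<beta> \<longleftrightarrow>
     \<comment> \<open>topology is the one given by the absolute value\<close>
     (\<forall>x y. dist x y = absv (x - y)) \<and>
     \<comment> \<open>non-discrete\<close>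
     \<not> open {0::'a} \<and>
     \<comment> \<open>locally compact\<close>
     (\<forall>x::'a. \<exists>U. open U \<and> x \<in> U \<and> compact (closure U)) \<and>
     \<comment> \<open>totally disconnected\<close>
     (\<forall>S::'a set. connected S \<longrightarrow> (\<exists>a. S \<subseteq> {a})) \<and>
     \<comment> \<open>ultrametric, multiplicative absolute value\<close>
     (\<forall>x y. absv (x * y) = absv x * absv y) \<and>
     (\<forall>x y. absv (x + y) \<le> max (absv x) (absv y)) \<and>
     \<comment> \<open>Haar measure on the Borel sets, normalised by mu(O) = 1\<close>
     sets M = sets borel \<and>
     (\<forall>A \<in> sets borel. \<forall>a. emeasure M ((\<lambda>x. a + x) ` A) = emeasure M A) \<and>
     (\<forall>A. compact A \<longrightarrow> emeasure M A < \<infinity>) \<and>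
     (\<forall>U. open U \<and> U \<noteq> {} \<longrightarrow> emeasure M U > 0) \<and>
     emeasure M (ring_of_integers absv) = 1 \<and>
     \<comment> \<open>canonical absolute value: modulus of multiplication\<close>
     (\<forall>A \<in> sets borel. \<forall>a. emeasure M ((\<lambda>x. a * x) ` A) = ennreal (absv a) * emeasure M A) \<and>
     \<comment> \<open>q = cardinality of the residue field O/P, beta a uniformizer\<close>
     finite (ring_of_integers absv // residue_rel absv) \<and>
     q = card (ring_of_integers absv // residue_rel absv) \<and>
     absv \<beta> = 1 / real q"

text \<open>B_k = beta^(-k) O = {x. |x| <= q^k}.\<close>
definition Bball :: "('a \<Rightarrow> real) \<Rightarrow> nat \<Rightarrow> int \<Rightarrow> 'a set" where
  "Bball absv q k = {x. absv x \<le> real q powi k}"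

definition L2 :: "'a measure \<Rightarrow> ('a \<Rightarrow> complex) \<Rightarrow> bool" where
  "L2 M f \<longleftrightarrow> f \<in> borel_measurable M \<and> integrable M (\<lambda>x. (cmod (f x))\<^sup>2)"

definition L2_inner :: "'a measure \<Rightarrow> ('a \<Rightarrow> complex) \<Rightarrow> ('a \<Rightarrow> complex) \<Rightarrow> complex" where
  "L2_inner M f g = (\<integral>x. f x * cnj (g x) \<partial>M)"

definition Cspace :: "('a \<Rightarrow> real) \<Rightarrow> 'a measure \<Rightarrow> nat \<Rightarrow> nat \<Rightarrow> ('a \<Rightarrow> complex) set" where
  "Cspace absv M q n = {f. L2 M f \<and> (AE x in M. x \<notin> Bball absv q (int n) \<longrightarrow> f x = 0)}"

definition Sspace :: "('a::ab_group_add \<Rightarrow> real) \<Rightarrow> 'a measure \<Rightarrow> nat \<Rightarrow> nat \<Rightarrow> ('a \<Rightarrow> complex) set" where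
  "Sspace absv M q n = {f. L2 M f \<and>
      (\<forall>h \<in> Bball absv q (- int n). AE x in M. f (x + h) = f x)}"

definition Cop :: "('a \<Rightarrow> real) \<Rightarrow> nat \<Rightarrow> nat \<Rightarrow> ('a \<Rightarrow> complex) \<Rightarrow> 'a \<Rightarrow> complex" where
  "Cop absv q n f = (\<lambda>x. indicator (Bball absv q (int n)) x * f x)"

definition Sop :: "('a::ab_group_add \<Rightarrow> real) \<Rightarrow> 'a measure \<Rightarrow> nat \<Rightarrow> nat
                   \<Rightarrow> ('a \<Rightarrow> complex) \<Rightarrow> 'a \<Rightarrow> complex" where
  "Sop absv M q n f = (\<lambda>x. complex_of_real (real q ^ n) *
                           (LINT y:Bball absv q (- int n)|M. f (x + y)))"

definition is_orth_proj :: "'a measure \<Rightarrow> (('a \<Rightarrow> complex) \<Rightarrow> 'a \<Rightarrow> complex)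
                            \<Rightarrow> ('a \<Rightarrow> complex) set \<Rightarrow> bool" where
  "is_orth_proj M P V \<longleftrightarrow>
     (\<forall>f. L2 M f \<longrightarrow> P f \<in> V \<and> (\<forall>g \<in> V. L2_inner M (\<lambda>x. f x - P f x) g = 0))"

end

theory Submission
  imports Defs
begin

locale nlf =
  fixes absv :: "'a::{field, metric_space} \<Rightarrow> real" and M :: "'a measure" and q :: nat and \<beta> :: 'a
  assumes nlf: "nonarch_local_field absv M q \<beta>"
begin

lemma dist_eq: "dist x y = absv (x - y)" using nlf[unfolded nonarch_local_field_def, THEN conjunct1] by simp
lemma mult: "absv (x * y) = absv x * absv y" using nlf[unfolded nonarch_local_field_def, THEN conjunct2, THEN conjunct2, THEN conjunct2, THEN conjunct2, THEN conjunct1] by simp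
lemma ultra: "absv (x + y) \<le> max (absv x) (absv y)" using nlf[unfolded nonarch_local_field_def, THEN conjunct2, THEN conjunct2, THEN conjunct2, THEN conjunct2, THEN conjunct2, THEN conjunct1] by simp
lemma setsM: "sets M = sets borel" using nlf[unfolded nonarch_local_field_def, THEN conjunct2, THEN conjunct2, THEN conjunct2, THEN conjunct2, THEN conjunct2, THEN conjunct2, THEN conjunct1] by simp
lemma transl: "A \<in> sets borel \<Longrightarrow> emeasure M ((\<lambda>x. a + x) ` A) = emeasure M A"
  using nlf[unfolded nonarch_local_field_def, THEN conjunct2, THEN conjunct2, THEN conjunct2, THEN conjunct2, THEN conjunct2, THEN conjunct2, THEN conjunct2, THEN conjunct1] by simp
lemma scal: "A \<in> sets borel \<Longrightarrow> emeasure M ((\<lambda>x. a * x) ` A) = ennreal (absv a) * emeasure M A"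
  using nlf[unfolded nonarch_local_field_def, THEN conjunct2, THEN conjunct2, THEN conjunct2, THEN conjunct2, THEN conjunct2, THEN conjunct2, THEN conjunct2, THEN conjunct2, THEN conjunct2, THEN conjunct2, THEN conjunct2, THEN conjunct1] by simp
lemma measO: "emeasure M (ring_of_integers absv) = 1"
  using nlf[unfolded nonarch_local_field_def, THEN conjunct2, THEN conjunct2, THEN conjunct2, THEN conjunct2, THEN conjunct2, THEN conjunct2, THEN conjunct2, THEN conjunct2, THEN conjunct2, THEN conjunct2, THEN conjunct1] by simp
lemma finq: "finite (ring_of_integers absv // residue_rel absv)"
  using nlf[unfolded nonarch_local_field_def, THEN conjunct2, THEN conjunct2, THEN conjunct2, THEN conjunct2, THEN conjunct2, THEN conjunct2, THEN conjunct2, THEN conjunct2, THEN conjunct2, THEN conjunct2, THEN conjunct2, THEN conjunct2, THEN conjunct1] by simp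
lemma qdef: "q = card (ring_of_integers absv // residue_rel absv)"
  using nlf[unfolded nonarch_local_field_def, THEN conjunct2, THEN conjunct2, THEN conjunct2, THEN conjunct2, THEN conjunct2, THEN conjunct2, THEN conjunct2, THEN conjunct2, THEN conjunct2, THEN conjunct2, THEN conjunct2, THEN conjunct2, THEN conjunct2, THEN conjunct1] by simp
lemma absb: "absv \<beta> = 1 / real q"
  using nlf[unfolded nonarch_local_field_def, THEN conjunct2, THEN conjunct2, THEN conjunct2, THEN conjunct2, THEN conjunct2, THEN conjunct2, THEN conjunct2, THEN conjunct2, THEN conjunct2, THEN conjunct2, THEN conjunct2, THEN conjunct2, THEN conjunct2, THEN conjunct2] by simp

lemma spaceM: "space M = UNIV"
  using sets_eq_imp_space_eq[OF setsM] by simp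

lemma absv_nonneg: "absv x \<ge> 0" using dist_eq[of x 0] by (metis diff_zero zero_le_dist)
lemma absv_0[simp]: "absv 0 = 0" using dist_eq[of 0 0] by simp
lemma absv_eq0: "absv x = 0 \<longleftrightarrow> x = 0" using dist_eq[of x 0] by (metis diff_zero dist_eq_0_iff)
lemma absv_1[simp]: "absv 1 = 1"
proof -
  have "absv 1 = absv 1 * absv 1" using mult[of 1 1] by simp
  moreover have "absv 1 \<noteq> 0" using absv_eq0 by simp
  ultimately show ?thesis by simp
qed
lemma absv_minus: "absv (- x) = absv x"
proof -
  have "absv (-1) * absv (-1) = 1" using mult[of "-1" "-1"] by simp
  hence "absv (-1) = 1" using absv_nonneg[of "-1"]
    by (metis abs_of_nonneg real_sqrt_abs2 real_sqrt_one power2_eq_square)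
  thus ?thesis using mult[of "-1" x] by simp
qed
lemma absv_diff_commute: "absv (x - y) = absv (y - x)"
  using absv_minus[of "x - y"] by simp
lemma ultra_diff: "absv (x - y) \<le> max (absv x) (absv y)"
  using ultra[of x "-y"] absv_minus[of y] by simp
lemma ultra3: "absv (x - z) \<le> max (absv (x - y)) (absv (y - z))"
  using ultra[of "x - y" "y - z"] by simp
lemma absv_inverse: "absv (inverse x) = inverse (absv x)"
  by (metis absv_0 absv_1 inverse_zero mult nonzero_inverse_eq_imp_eq right_inverse inverse_unique)
lemma absv_power: "absv (x ^ k) = absv x ^ k"
  by (induction k) (auto simp: mult)
lemma absv_powi: "absv (x powi k) = absv x powi k"
  by (auto simp: power_int_def absv_power absv_inverse power_inverse)

lemma q_ge2: "q \<ge> 2"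
proof -
  let ?O = "ring_of_integers absv" and ?r = "residue_rel absv"
  have "0 \<in> ?O" "1 \<in> ?O" by (auto simp: ring_of_integers_def)
  hence a: "?r `` {0} \<in> ?O // ?r" "?r `` {1} \<in> ?O // ?r" by (auto simp: quotient_def)
  have "(0,0) \<in> ?r" using \<open>0 \<in> ?O\<close> by (auto simp: residue_rel_def)
  moreover have "(1,(0::'a)) \<notin> ?r" by (auto simp: residue_rel_def)
  ultimately have "?r `` {0} \<noteq> ?r `` {1}" by (metis Image_singleton_iff)
  hence "card {?r `` {0}, ?r `` {1}} = 2" by simp
  moreover have "card {?r `` {0}, ?r `` {1}} \<le> card (?O // ?r)"
    using a finq by (intro card_mono) auto
  ultimately show ?thesis using qdef by simp
qed

definition R :: "int \<Rightarrow> real" where "R k = real q powi k"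
definition cb :: "'a \<Rightarrow> int \<Rightarrow> 'a set" where "cb a k = {x. absv (x - a) \<le> R k}"

lemma R_pos: "R k > 0" using q_ge2 by (simp add: R_def)
lemma R_mono: "j \<le> k \<Longrightarrow> R j \<le> R k"
  using q_ge2 unfolding R_def by (intro power_int_increasing) auto
lemma R_small: "r > 0 \<Longrightarrow> \<exists>m::nat. R (- int m) < r"
proof -
  assume r: "r > 0"
  obtain m::nat where "(1 / real q) ^ m < r"
    using real_arch_pow_inv[OF r, of "1/real q"] q_ge2 by auto
  moreover have "R (- int m) = (1 / real q) ^ m"
    by (simp add: R_def power_int_minus power_divide divide_inverse power_inverse)
  ultimately show ?thesis by metis
qed
lemma R_big: "\<exists>m::nat. x \<le> R (int m)"
proof -
  obtain m::nat where "x < 2 ^ m" using real_arch_pow[of 2 x] by auto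
  moreover have "(2::real) ^ m \<le> real q ^ m" using q_ge2 by (intro power_mono) auto
  ultimately have "x \<le> R (int m)" by (simp add: R_def)
  thus ?thesis by blast
qed

lemma Bball_cb: "Bball absv q k = cb 0 k" by (simp add: Bball_def cb_def R_def)

lemma cb_same: "b \<in> cb a k \<Longrightarrow> cb b k = cb a k"
proof -
  assume "b \<in> cb a k"
  hence ba: "absv (b - a) \<le> R k" "absv (a - b) \<le> R k"
    by (auto simp: cb_def absv_diff_commute[of a b])
  show ?thesis
  proof (rule set_eqI)
    fix x
    have "absv (x - a) \<le> max (absv (x - b)) (absv (b - a))" by (rule ultra3)
    moreover have "absv (x - b) \<le> max (absv (x - a)) (absv (a - b))" by (rule ultra3)
    ultimately show "x \<in> cb b k \<longleftrightarrow> x \<in> cb a k" using ba by (auto simp: cb_def)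
  qed
qed


lemma cb_cball: "cb a k = cball a (R k)"
  by (auto simp: cb_def cball_def dist_eq absv_diff_commute)
lemma cb_borel[measurable]: "cb a k \<in> sets borel"
  unfolding cb_cball by simp
lemma cb_M[measurable]: "cb a k \<in> sets M"
  using setsM by simp
lemma Bball_M[measurable]: "Bball absv q k \<in> sets M"
  unfolding Bball_cb by simp

lemma isometry_open:
  fixes a :: 'a and S :: "'a set"
  assumes S: "open S"
  shows "open ((\<lambda>x. a + x) -` S)"
proof -
  have d: "dist (a + y) (a + x) = dist y x" for x y by (simp add: dist_eq)
  show ?thesis unfolding open_dist
  proof (intro ballI)
    fix x assume "x \<in> (\<lambda>x. a + x) -` S"
    hence "a + x \<in> S" by simp
    then obtain e where e: "e > 0" "\<And>z. dist z (a + x) < e \<Longrightarrow> z \<in> S"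
      using S unfolding open_dist by blast
    show "\<exists>e>0. \<forall>y. dist y x < e \<longrightarrow> y \<in> (\<lambda>x. a + x) -` S"
      using e d by (metis vimage_eq)
  qed
qed

lemma transl_meas[measurable]: "(\<lambda>x. (a::'a) + x) \<in> measurable M M"
proof -
  have "(\<lambda>x. a + x) \<in> borel_measurable borel"
    by (rule borel_measurableI) (simp add: isometry_open)
  moreover have "measurable M M = measurable borel borel" by (rule measurable_cong_sets[OF setsM setsM])
  ultimately show ?thesis by simp
qed

lemma distr_transl: "distr M M (\<lambda>x. (a::'a) + x) = M"
proof (rule measure_eqI)
  fix A assume A: "A \<in> sets (distr M M (\<lambda>x. a + x))"
  hence A': "A \<in> sets borel" using setsM by simp
  have AM: "A \<in> sets M" using A by simp
  have eq: "(\<lambda>x. a + x) -` A \<inter> space M = (\<lambda>x. -a + x) ` A"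
  proof (rule set_eqI, rule iffI)
    fix x assume "x \<in> (\<lambda>x. a + x) -` A \<inter> space M"
    hence "a + x \<in> A" by simp
    moreover have "x = -a + (a + x)" by simp
    ultimately show "x \<in> (\<lambda>x. -a + x) ` A" by (rule rev_image_eqI)
  next
    fix x assume "x \<in> (\<lambda>x. -a + x) ` A"
    then obtain y where "y \<in> A" "x = -a + y" by blast
    thus "x \<in> (\<lambda>x. a + x) -` A \<inter> space M" by (simp add: spaceM)
  qed
  have "emeasure (distr M M (\<lambda>x. a + x)) A = emeasure M ((\<lambda>x. a + x) -` A \<inter> space M)"
    by (rule emeasure_distr[OF transl_meas AM])
  also have "\<dots> = emeasure M ((\<lambda>x. -a + x) ` A)" by (simp only: eq)
  also have "\<dots> = emeasure M A" by (rule transl[OF A'])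
  finally show "emeasure (distr M M (\<lambda>x. a + x)) A = emeasure M A" .
qed simp

lemma emeasure_cb0: "emeasure M (cb 0 k) = ennreal (R k)"
proof -
  define c where "c = inverse \<beta> powi k"
  have ab: "absv (inverse \<beta>) = real q" using absb by (simp add: absv_inverse)
  have ac: "absv c = R k" by (simp add: c_def absv_powi ab R_def)
  hence c0: "c \<noteq> 0" using R_pos[of k] by auto
  have O: "ring_of_integers absv = cb 0 0" by (auto simp: ring_of_integers_def cb_def R_def)
  have "(\<lambda>x. c * x) ` cb 0 0 = cb 0 k"
  proof safe
    fix x assume "x \<in> cb 0 0"
    thus "c * x \<in> cb 0 k" using ac R_pos[of k] by (auto simp: cb_def R_def mult mult_left_le)
  next
    fix y assume y: "y \<in> cb 0 k"
    have yk: "absv y \<le> R k" using y by (simp add: cb_def)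
    have "absv (inverse c * y) = absv y / R k"
      by (simp add: mult absv_inverse ac divide_inverse mult.commute)
    also have "\<dots> \<le> 1" using yk R_pos[of k] by simp
    finally have "absv (inverse c * y) \<le> 1" .
    hence "inverse c * y \<in> cb 0 0" by (simp add: cb_def R_def)
    moreover have "y = c * (inverse c * y)" using c0 by simp
    ultimately show "y \<in> (\<lambda>x. c * x) ` cb 0 0" by blast
  qed
  hence "emeasure M (cb 0 k) = ennreal (absv c) * emeasure M (cb 0 0)"
    using scal[of "cb 0 0" c] by simp
  thus ?thesis using measO O ac by simp
qed

lemma emeasure_cb: "emeasure M (cb a k) = ennreal (R k)"
proof -
  have "(\<lambda>x. a + x) ` cb 0 k = cb a k"
    by (auto simp: cb_def image_iff) (metis add_diff_cancel_left' add_diff_eq diff_add_cancel)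
  thus ?thesis using transl[of "cb 0 k" a] emeasure_cb0 by simp
qed

lemma measure_cb: "measure M (cb a k) = R k"
  using emeasure_cb R_pos by (simp add: measure_def less_imp_le)


lemma cb_disj: "cb a k \<noteq> cb b k \<Longrightarrow> cb a k \<inter> cb b k = {}"
  using cb_same by blast

lemma cb_self: "a \<in> cb a k" using R_pos by (simp add: cb_def less_imp_le)

lemma cb_sub: "a \<in> cb 0 k \<Longrightarrow> j \<le> k \<Longrightarrow> cb a j \<subseteq> cb 0 k"
  unfolding cb_def using ultra3[of _ 0 a] R_mono[of j k]
  by auto (smt (verit) diff_zero)

lemma finite_disj_family:
  assumes F: "F \<subseteq> sets M" and d: "disjoint F" and sub: "\<And>E. E \<in> F \<Longrightarrow> E \<subseteq> A"
    and c: "\<And>E. E \<in> F \<Longrightarrow> emeasure M E = ennreal c" and cpos: "c > 0"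
    and A: "A \<in> sets M" "emeasure M A = ennreal a"
  shows "finite F"
proof (rule ccontr)
  assume inf: "infinite F"
  define N where "N = nat \<lceil>a / c\<rceil> + 1"
  obtain S where S: "S \<subseteq> F" "finite S" "card S = N"
    using infinite_arbitrarily_large[OF inf] by blast
  have "(\<Sum>E\<in>S. emeasure M (id E)) = emeasure M (\<Union>E\<in>S. id E)"
  proof (rule sum_emeasure)
    show "id ` S \<subseteq> sets M" using S F by auto
    show "disjoint_family_on id S"
      unfolding disjoint_family_on_def id_def using S(1) d unfolding disjoint_def by blast
  qed (rule S(2))
  also have "\<dots> \<le> emeasure M A" using S sub A by (intro emeasure_mono) auto
  finally have "(\<Sum>E\<in>S. ennreal c) \<le> ennreal a" using c S A by (simp add: subset_eq)
  hence "ennreal (real N * c) \<le> ennreal a" using S by (simp add: ennreal_of_nat_eq_real_of_nat ennreal_mult')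
  hence hle: "ennreal (real N * c) \<le> ennreal a" .
  have pos: "0 < real N * c" using cpos by (simp add: N_def)
  have le: "real N * c \<le> a"
  proof (cases "a \<ge> 0")
    case True thus ?thesis using hle by simp
  next
    case False
    hence "ennreal a = 0" by (intro ennreal_neg) simp
    hence "ennreal (real N * c) = 0" using hle by simp
    thus ?thesis using pos by (simp add: ennreal_eq_0_iff)
  qed
  have "a / c < real N" unfolding N_def by linarith
  hence "a < real N * c" using cpos by (simp add: field_simps)
  thus False using le by linarith
qed

lemma finite_fam: "j \<le> k \<Longrightarrow> finite ((\<lambda>a. cb a j) ` cb 0 k)"
proof (rule finite_disj_family[where A="cb 0 k" and c="R j" and a="R k"])
  assume jk: "j \<le> k"
  show "disjoint ((\<lambda>a. cb a j) ` cb 0 k)"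
    unfolding disjoint_def using cb_disj by auto
  show "(\<lambda>a. cb a j) ` cb 0 k \<subseteq> sets M" by auto
  show "E \<subseteq> cb 0 k" if "E \<in> (\<lambda>a. cb a j) ` cb 0 k" for E
    using that cb_sub[OF _ jk] by blast
  show "emeasure M E = ennreal (R j)" if "E \<in> (\<lambda>a. cb a j) ` cb 0 k" for E
    using that emeasure_cb by blast
  show "0 < R j" by (rule R_pos)
  show "cb 0 k \<in> sets M" by simp
  show "emeasure M (cb 0 k) = ennreal (R k)" by (rule emeasure_cb)
qed

definition cosets :: "int \<Rightarrow> 'a set set" where "cosets j = range (\<lambda>a. cb a j)"

lemma countable_cosets: "countable (cosets j)"
proof -
  have "cosets j = (\<Union>m::nat. (\<lambda>a. cb a j) ` cb 0 (int m + \<bar>j\<bar>))"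
  proof -
    have "\<exists>m::nat. a \<in> cb 0 (int m + \<bar>j\<bar>)" for a
    proof -
      obtain m::nat where "absv a \<le> R (int m)" using R_big by blast
      moreover have "R (int m) \<le> R (int m + \<bar>j\<bar>)" by (rule R_mono) simp
      ultimately have "a \<in> cb 0 (int m + \<bar>j\<bar>)" by (simp add: cb_def)
      thus ?thesis by blast
    qed
    thus ?thesis unfolding cosets_def by blast
  qed
  moreover have "finite ((\<lambda>a. cb a j) ` cb 0 (int m + \<bar>j\<bar>))" for m :: nat
    by (rule finite_fam) simp
  hence "\<And>m. m \<in> UNIV \<Longrightarrow> countable ((\<lambda>a. cb a j) ` cb 0 (int m + \<bar>j\<bar>))"
    by (simp add: countable_finite)
  hence "countable (\<Union>m. (\<lambda>a. cb a j) ` cb 0 (int m + \<bar>j\<bar>))"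
    by (intro countable_UN) simp_all
  ultimately show ?thesis by simp
qed


lemma sigma_finite: "sigma_finite_measure M"
proof
  show "\<exists>A::'a set set. countable A \<and> A \<subseteq> sets M \<and> \<Union>A = space M \<and> (\<forall>a\<in>A. emeasure M a \<noteq> \<infinity>)"
  proof (intro exI conjI)
    show "countable (range (\<lambda>m::nat. cb 0 (int m)))" by simp
    show "range (\<lambda>m::nat. cb 0 (int m)) \<subseteq> sets M" by auto
    show "\<Union> (range (\<lambda>m::nat. cb 0 (int m))) = space M"
      using R_big by (auto simp: spaceM cb_def)
    show "\<forall>a\<in>range (\<lambda>m::nat. cb 0 (int m)). emeasure M a \<noteq> \<infinity>"
      by (auto simp: emeasure_cb)
  qed
qed

lemma plus_pair_meas: "(\<lambda>p. fst p + snd p) \<in> borel_measurable (M \<Otimes>\<^sub>M M)"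
proof (rule borel_measurableI)
  fix S :: "'a set" assume S: "open S"
  define G where "G m = {E \<times> F | E F. E \<in> cosets (- int m) \<and> F \<in> cosets (- int m) \<and>
      E \<times> F \<subseteq> (\<lambda>p. fst p + snd p) -` S}" for m :: nat
  have eq: "(\<lambda>p. fst p + snd p) -` S \<inter> space (M \<Otimes>\<^sub>M M) = \<Union>(\<Union>m. G m)"
  proof
    show "\<Union>(\<Union>m. G m) \<subseteq> (\<lambda>p. fst p + snd p) -` S \<inter> space (M \<Otimes>\<^sub>M M)"
      by (auto simp: G_def space_pair_measure spaceM)
  next
    show "(\<lambda>p. fst p + snd p) -` S \<inter> space (M \<Otimes>\<^sub>M M) \<subseteq> \<Union>(\<Union>m. G m)"
    proof (rule subsetI)
      fix p assume p: "p \<in> (\<lambda>p. fst p + snd p) -` S \<inter> space (M \<Otimes>\<^sub>M M)"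
      obtain x y where pxy: "p = (x, y)" by (cases p)
      have "x + y \<in> S" using p pxy by simp
      then obtain r where r: "r > 0" "\<And>z. dist z (x + y) < r \<Longrightarrow> z \<in> S"
        using S unfolding open_dist by (auto simp: dist_commute)
      obtain m where m: "R (- int m) < r" using R_small[OF r(1)] by blast
      have xyS: "x' + y' \<in> S" if "x' \<in> cb x (- int m)" "y' \<in> cb y (- int m)" for x' y'
      proof -
        have "absv (x' - x) \<le> R (- int m)" "absv (y' - y) \<le> R (- int m)"
          using that by (simp_all add: cb_def)
        hence "absv ((x' - x) + (y' - y)) \<le> R (- int m)"
          using ultra[of "x' - x" "y' - y"] by linarith
        moreover have "(x' - x) + (y' - y) = (x' + y') - (x + y)" by (simp add: algebra_simps)
        ultimately have "dist (x' + y') (x + y) < r" using m by (simp add: dist_eq)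
        thus "x' + y' \<in> S" using r by blast
      qed
      have "cb x (- int m) \<times> cb y (- int m) \<subseteq> (\<lambda>p. fst p + snd p) -` S"
        using xyS by auto
      hence "cb x (- int m) \<times> cb y (- int m) \<in> G m" unfolding G_def cosets_def by blast
      moreover have "(x, y) \<in> cb x (- int m) \<times> cb y (- int m)" by (simp add: cb_self)
      ultimately show "p \<in> \<Union>(\<Union>m. G m)" unfolding pxy by blast
    qed
  qed
  have "countable (G m)" for m
  proof -
    have "G m \<subseteq> (\<lambda>(E, F). E \<times> F) ` (cosets (- int m) \<times> cosets (- int m))"
      unfolding G_def by auto
    thus ?thesis using countable_cosets by (meson countable_SIGMA countable_image countable_subset)
  qed
  hence "countable (\<Union>m. G m)" by auto
  moreover have "(\<Union>m. G m) \<subseteq> sets (M \<Otimes>\<^sub>M M)"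
    unfolding G_def cosets_def by auto
  ultimately show "(\<lambda>p. fst p + snd p) -` S \<inter> space (M \<Otimes>\<^sub>M M) \<in> sets (M \<Otimes>\<^sub>M M)"
    unfolding eq by (rule sets.countable_Union)
qed


lemma ae_swap:
  fixes g :: "'a \<Rightarrow> complex"
  assumes g: "g \<in> borel_measurable M"
    and inv: "\<forall>h \<in> cb 0 j. AE x in M. g (x + h) = g x"
  shows "AE x in M. AE h in M. h \<in> cb 0 j \<longrightarrow> g (x + h) = g x"
proof -
  interpret S: sigma_finite_measure M by (rule sigma_finite)
  interpret P: pair_sigma_finite M M ..
  have "borel_measurable M = borel_measurable borel" by (rule measurable_cong_sets[OF setsM refl])
  hence gb: "g \<in> borel_measurable borel" using g by metis
  have m1[measurable]: "(\<lambda>p. g (fst p + snd p)) \<in> borel_measurable (M \<Otimes>\<^sub>M M)"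
    using measurable_compose[OF plus_pair_meas gb] .
  have [measurable]: "g \<in> borel_measurable M" by (rule g)
  have set: "{p \<in> space (M \<Otimes>\<^sub>M M). (\<lambda>x h. h \<in> cb 0 j \<longrightarrow> g (x + h) = g x) (fst p) (snd p)}
      \<in> sets (M \<Otimes>\<^sub>M M)"
    by measurable
  have "AE h in M. AE x in M. h \<in> cb 0 j \<longrightarrow> g (x + h) = g x"
  proof (rule AE_I2)
    fix h show "AE x in M. h \<in> cb 0 j \<longrightarrow> g (x + h) = g x"
      using inv by (cases "h \<in> cb 0 j") auto
  qed
  thus ?thesis using P.AE_commute[OF set] by simp
qed

lemma ae_const:
  fixes g :: "'a \<Rightarrow> complex"
  assumes g: "g \<in> borel_measurable M"
    and inv: "\<forall>h \<in> cb 0 j. AE x in M. g (x + h) = g x"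
  shows "\<exists>\<gamma>. AE y in M. y \<in> cb a j \<longrightarrow> g y = \<gamma>"
proof -
  have ae: "AE x in M. AE h in M. h \<in> cb 0 j \<longrightarrow> g (x + h) = g x"
    by (rule ae_swap[OF g inv])
  obtain x0 where x0: "x0 \<in> cb a j" "AE h in M. h \<in> cb 0 j \<longrightarrow> g (x0 + h) = g x0"
  proof (rule ccontr)
    assume "\<not> thesis"
    hence "\<forall>x \<in> cb a j. \<not> (AE h in M. h \<in> cb 0 j \<longrightarrow> g (x + h) = g x)" using that by blast
    hence "AE x in M. \<not> (x \<in> cb a j)" using ae by (auto elim: AE_mp)
    hence "emeasure M {x \<in> space M. x \<in> cb a j} = 0" by (rule emeasure_eq_0_AE)
    thus False using emeasure_cb[of a j] R_pos[of j] by (simp add: spaceM)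
  qed
  have [measurable]: "g \<in> borel_measurable M" by (rule g)
  have eq: "cb x0 j = cb a j" by (rule cb_same[OF x0(1)])
  have "AE h in M. (x0 + h) \<in> cb x0 j \<longrightarrow> g (x0 + h) = g x0"
    using x0(2) by (simp add: cb_def)
  hence "AE y in distr M M (\<lambda>h. x0 + h). y \<in> cb x0 j \<longrightarrow> g y = g x0"
    by (subst AE_distr_iff) auto
  hence "AE y in M. y \<in> cb x0 j \<longrightarrow> g y = g x0" unfolding distr_transl .
  hence "AE y in M. y \<in> cb a j \<longrightarrow> g y = g x0" unfolding eq .
  thus ?thesis by blast
qed


lemma transl_setint:
  fixes f :: "'a \<Rightarrow> complex"
  assumes f[measurable]: "f \<in> borel_measurable M"
  shows "(LINT y:cb 0 j|M. f (x + y)) = (LINT z:cb x j|M. f z)"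
proof -
  have "(LINT z:cb x j|M. f z) = integral\<^sup>L (distr M M (\<lambda>y. x + y)) (\<lambda>z. indicator (cb x j) z *\<^sub>R f z)"
    by (simp add: distr_transl set_lebesgue_integral_def)
  also have "\<dots> = integral\<^sup>L M (\<lambda>y. indicator (cb x j) (x + y) *\<^sub>R f (x + y))"
    by (rule integral_distr) auto
  also have "\<dots> = (LINT y:cb 0 j|M. f (x + y))"
    unfolding set_lebesgue_integral_def
    by (rule Bochner_Integration.integral_cong[OF refl]) (simp add: indicator_def cb_def)
  finally show ?thesis ..
qed

lemma L2_integrable_on:
  fixes f :: "'a \<Rightarrow> complex"
  assumes "L2 M f" "E \<in> sets M" "emeasure M E < \<infinity>"
  shows "integrable M (\<lambda>x. indicator E x * f x)"
proof (rule Bochner_Integration.integrable_bound)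
  have f[measurable]: "f \<in> borel_measurable M" using assms(1) by (simp add: L2_def)
  show "integrable M (\<lambda>x. indicator E x + (cmod (f x))\<^sup>2 :: real)"
    using assms by (intro Bochner_Integration.integrable_add) (auto simp: L2_def)
  have [measurable]: "E \<in> sets M" by (rule assms(2))
  show "(\<lambda>x. indicator E x * f x) \<in> borel_measurable M" by measurable
  show "AE x in M. norm (indicator E x * f x) \<le> norm (indicator E x + (cmod (f x))\<^sup>2 :: real)"
  proof (rule AE_I2)
    fix x
    have "0 \<le> (cmod (f x) - 1)\<^sup>2" by simp
    hence "2 * cmod (f x) \<le> 1 + (cmod (f x))\<^sup>2" by (simp add: power2_eq_square algebra_simps)
    hence "cmod (f x) \<le> 1 + (cmod (f x))\<^sup>2" using norm_ge_zero[of "f x"] by linarith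
    thus "norm (indicator E x * f x) \<le> norm (indicator E x + (cmod (f x))\<^sup>2 :: real)"
      by (auto simp: indicator_def norm_mult)
  qed
qed


lemma shift_in: "y \<in> cb 0 (- int n) \<Longrightarrow> (x + y \<in> cb 0 (int n)) = (x \<in> cb 0 (int n))"
proof -
  assume y: "y \<in> cb 0 (- int n)"
  have yl: "absv y \<le> R (int n)" using y R_mono[of "- int n" "int n"] by (simp add: cb_def)
  have "absv (x + y) \<le> max (absv x) (absv y)" by (rule ultra)
  moreover have "absv x \<le> max (absv (x + y)) (absv y)"
    using ultra_diff[of "x + y" y] by simp
  ultimately show ?thesis using yl by (auto simp: cb_def)
qed

lemma commute: "Cop absv q n (Sop absv M q n f) x = Sop absv M q n (Cop absv q n f) x"
proof -
  have "(LINT y:Bball absv q (- int n)|M. indicator (Bball absv q (int n)) (x + y) * f (x + y))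
      = (LINT y:Bball absv q (- int n)|M. indicator (Bball absv q (int n)) x * f (x + y))"
    unfolding set_lebesgue_integral_def Bball_cb
  proof (rule Bochner_Integration.integral_cong[OF refl])
    fix y
    show "indicator (cb 0 (- int n)) y *\<^sub>R (indicator (cb 0 (int n)) (x + y) * f (x + y)) =
          indicator (cb 0 (- int n)) y *\<^sub>R (indicator (cb 0 (int n)) x * f (x + y))"
    proof (cases "y \<in> cb 0 (- int n)")
      case True
      hence "indicator (cb 0 (int n)) (x + y) = (indicator (cb 0 (int n)) x :: complex)"
        using shift_in[OF True, of x] by (simp add: indicator_def)
      thus ?thesis by simp
    qed simp
  qed
  also have "\<dots> = indicator (Bball absv q (int n)) x * (LINT y:Bball absv q (- int n)|M. f (x + y))"
    unfolding set_lebesgue_integral_def by (simp add: scaleR_conv_of_real mult.left_commute)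
  finally show ?thesis by (simp add: Cop_def Sop_def mult.left_commute)
qed

lemma Sop_eq: "f \<in> borel_measurable M \<Longrightarrow>
    Sop absv M q n f x = complex_of_real (real q ^ n) * (LINT z:cb x (- int n)|M. f z)"
  by (simp add: Sop_def Bball_cb transl_setint)

lemma cb_in_fam: "(cb x (- int n) \<in> (\<lambda>a. cb a (- int n)) ` cb 0 (int n)) = (x \<in> cb 0 (int n))"
proof
  assume "cb x (- int n) \<in> (\<lambda>a. cb a (- int n)) ` cb 0 (int n)"
  then obtain a where a: "a \<in> cb 0 (int n)" "cb x (- int n) = cb a (- int n)" by blast
  have "x \<in> cb a (- int n)" using a(2) cb_self[of x "- int n"] by (metis)
  thus "x \<in> cb 0 (int n)" using cb_sub[OF a(1), of "- int n"] by blast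
qed auto

lemma fam_mem: "E \<in> (\<lambda>a. cb a (- int n)) ` cb 0 (int n) \<Longrightarrow> (x \<in> E) = (E = cb x (- int n))"
  using cb_same cb_self by auto

lemma P_sum:
  assumes f: "f \<in> borel_measurable M"
  shows "Cop absv q n (Sop absv M q n f) x =
    (\<Sum>E\<in>(\<lambda>a. cb a (- int n)) ` cb 0 (int n).
        indicator E x * (complex_of_real (real q ^ n) * (LINT z:E|M. f z)))"
proof -
  let ?F = "(\<lambda>a. cb a (- int n)) ` cb 0 (int n)"
  let ?c = "\<lambda>E. complex_of_real (real q ^ n) * (LINT z:E|M. f z)"
  have "(\<Sum>E\<in>?F. indicator E x * ?c E) = (\<Sum>E\<in>?F. if E = cb x (- int n) then ?c E else 0)"
    by (intro sum.cong refl) (simp add: indicator_def fam_mem)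
  also have "\<dots> = (if cb x (- int n) \<in> ?F then ?c (cb x (- int n)) else 0)"
    by (rule sum.delta) (rule finite_fam; simp)
  also have "\<dots> = Cop absv q n (Sop absv M q n f) x"
    by (simp add: cb_in_fam Cop_def Sop_eq[OF f] Bball_cb)
  finally show ?thesis ..
qed


lemma P_in:
  assumes L: "L2 M f"
  shows "Cop absv q n (Sop absv M q n f) \<in> Cspace absv M q n \<inter> Sspace absv M q n"
proof -
  have f[measurable]: "f \<in> borel_measurable M" using L by (simp add: L2_def)
  let ?F = "(\<lambda>a. cb a (- int n)) ` cb 0 (int n)"
  let ?c = "\<lambda>E. complex_of_real (real q ^ n) * (LINT z:E|M. f z)"
  let ?P = "Cop absv q n (Sop absv M q n f)"
  have finF: "finite ?F" by (rule finite_fam) simp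
  have Peq: "?P = (\<lambda>x. \<Sum>E\<in>?F. indicator E x * ?c E)"
    using P_sum[OF f] by (intro ext) simp
  have Fsets: "E \<in> ?F \<Longrightarrow> E \<in> sets M" for E by auto
  have Pm: "?P \<in> borel_measurable M"
    unfolding Peq
  proof (rule borel_measurable_sum)
    fix E assume "E \<in> ?F"
    hence [measurable]: "E \<in> sets M" by auto
    show "(\<lambda>x. indicator E x * ?c E) \<in> borel_measurable M" by measurable
  qed
  define S where "S = (\<Sum>E\<in>?F. cmod (?c E))"
  have bound: "cmod (?P x) \<le> indicator (cb 0 (int n)) x * S" for x
  proof (cases "x \<in> cb 0 (int n)")
    case True
    hence "cb x (- int n) \<in> ?F" using cb_in_fam by simp
    hence "cmod (?c (cb x (- int n))) \<le> S" unfolding S_def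
      by (intro member_le_sum finF) auto
    thus ?thesis using True by (simp add: Cop_def Bball_cb Sop_eq[OF f])
  next
    case False thus ?thesis by (simp add: Cop_def Bball_cb)
  qed
  have L2P: "L2 M ?P"
    unfolding L2_def
  proof (rule conjI[OF Pm], rule Bochner_Integration.integrable_bound)
    have "integrable M (indicator (cb 0 (int n)) :: 'a \<Rightarrow> real)"
      using emeasure_cb[of 0 "int n"] by (intro integrable_real_indicator) auto
    thus "integrable M (\<lambda>x. indicator (cb 0 (int n)) x * S\<^sup>2)"
      by (rule integrable_mult_left)
    have [measurable]: "?P \<in> borel_measurable M" by (rule Pm)
    show "(\<lambda>x. (cmod (?P x))\<^sup>2) \<in> borel_measurable M" by measurable
    show "AE x in M. norm ((cmod (?P x))\<^sup>2) \<le> norm (indicator (cb 0 (int n)) x * S\<^sup>2)"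
    proof (rule AE_I2)
      fix x
      have "(cmod (?P x))\<^sup>2 \<le> (indicator (cb 0 (int n)) x * S)\<^sup>2"
        using bound[of x] by (intro power_mono) auto
      thus "norm ((cmod (?P x))\<^sup>2) \<le> norm (indicator (cb 0 (int n)) x * S\<^sup>2)"
        by (cases "x \<in> cb 0 (int n)") (simp_all add: indicator_def Cop_def Bball_cb)
    qed
  qed
  have C: "?P \<in> Cspace absv M q n"
    unfolding Cspace_def using L2P by (auto simp: Cop_def)
  have "?P (x + h) = ?P x" if h: "h \<in> Bball absv q (- int n)" for x h
  proof -
    have h': "h \<in> cb 0 (- int n)" using h by (simp add: Bball_cb)
    have "x + h \<in> cb x (- int n)" using h' by (simp add: cb_def)
    hence "cb (x + h) (- int n) = cb x (- int n)" by (rule cb_same)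
    thus ?thesis using shift_in[OF h', of x]
      by (simp add: Cop_def Bball_cb Sop_eq[OF f] indicator_def)
  qed
  hence S: "?P \<in> Sspace absv M q n"
    unfolding Sspace_def using L2P by auto
  show ?thesis using C S by blast
qed


lemma sum_fam:
  fixes h :: "'a set \<Rightarrow> complex"
  shows "(\<Sum>E\<in>(\<lambda>a. cb a (- int n)) ` cb 0 (int n). indicator E x * h E)
       = (if x \<in> cb 0 (int n) then h (cb x (- int n)) else 0)"
proof -
  let ?F = "(\<lambda>a. cb a (- int n)) ` cb 0 (int n)"
  have "(\<Sum>E\<in>?F. indicator E x * h E) = (\<Sum>E\<in>?F. if E = cb x (- int n) then h E else 0)"
    by (intro sum.cong refl) (simp add: indicator_def fam_mem)
  also have "\<dots> = (if cb x (- int n) \<in> ?F then h (cb x (- int n)) else 0)"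
    by (rule sum.delta) (rule finite_fam; simp)
  finally show ?thesis by (simp add: cb_in_fam)
qed

lemma orth:
  assumes L: "L2 M f" and g: "g \<in> Cspace absv M q n \<inter> Sspace absv M q n"
  shows "L2_inner M (\<lambda>x. f x - Cop absv q n (Sop absv M q n f) x) g = 0"
proof -
  have f[measurable]: "f \<in> borel_measurable M" using L by (simp add: L2_def)
  have gm[measurable]: "g \<in> borel_measurable M" using g by (simp add: Cspace_def L2_def)
  have cm: "cnj \<in> borel_measurable borel"
    by (intro borel_measurable_continuous_onI continuous_intros)
  have [measurable]: "(\<lambda>x. cnj (g x)) \<in> borel_measurable M" using measurable_compose[OF gm cm] .
  let ?F = "(\<lambda>a. cb a (- int n)) ` cb 0 (int n)"
  let ?c = "\<lambda>E. complex_of_real (real q ^ n) * (LINT z:E|M. f z)"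
  let ?P = "Cop absv q n (Sop absv M q n f)"
  have finF: "finite ?F" by (rule finite_fam) simp
  have Fsets: "E \<in> ?F \<Longrightarrow> E \<in> sets M" for E by auto
  have inv: "\<forall>h \<in> cb 0 (- int n). AE x in M. g (x + h) = g x"
    using g by (simp add: Sspace_def Bball_cb)
  define \<gamma> where "\<gamma> E = (SOME \<gamma>. AE y in M. y \<in> E \<longrightarrow> g y = \<gamma>)" for E
  have \<gamma>: "AE y in M. y \<in> E \<longrightarrow> g y = \<gamma> E" if E: "E \<in> ?F" for E
  proof -
    obtain a where "E = cb a (- int n)" using E by blast
    hence "\<exists>\<gamma>. AE y in M. y \<in> E \<longrightarrow> g y = \<gamma>" using ae_const[OF gm inv] by simp
    thus ?thesis unfolding \<gamma>_def by (rule someI_ex)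
  qed
  have ae1: "AE x in M. \<forall>E\<in>?F. x \<in> E \<longrightarrow> g x = \<gamma> E"
    using \<gamma> by (intro AE_finite_allI finF) auto
  have ae2: "AE x in M. x \<notin> cb 0 (int n) \<longrightarrow> g x = 0"
    using g by (simp add: Cspace_def Bball_cb)
  have ae: "AE x in M. (f x - ?P x) * cnj (g x) =
      (\<Sum>E\<in>?F. indicator E x * ((f x - ?c E) * cnj (\<gamma> E)))"
    using ae1 ae2
  proof eventually_elim
    case (elim x)
    show ?case
    proof (cases "x \<in> cb 0 (int n)")
      case True
      hence "cb x (- int n) \<in> ?F" using cb_in_fam by simp
      hence "g x = \<gamma> (cb x (- int n))" using elim(1) cb_self by blast
      have Px: "?P x = ?c (cb x (- int n))"
        unfolding P_sum[OF f] sum_fam[of x ?c] using True by simp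
      have Rx: "(\<Sum>E\<in>?F. indicator E x * ((f x - ?c E) * cnj (\<gamma> E)))
           = (f x - ?c (cb x (- int n))) * cnj (\<gamma> (cb x (- int n)))"
        unfolding sum_fam[of x "\<lambda>E. (f x - ?c E) * cnj (\<gamma> E)"] using True by simp
      show ?thesis unfolding Px Rx using \<open>g x = \<gamma> (cb x (- int n))\<close> by simp
    next
      case False
      have Rx: "(\<Sum>E\<in>?F. indicator E x * ((f x - ?c E) * cnj (\<gamma> E))) = 0"
        unfolding sum_fam[of x "\<lambda>E. (f x - ?c E) * cnj (\<gamma> E)"] using False by simp
      show ?thesis unfolding Rx using False elim(2) by simp
    qed
  qed
  have term0: "integral\<^sup>L M (\<lambda>x. indicator E x * ((f x - ?c E) * cnj (\<gamma> E))) = 0"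
    if E: "E \<in> ?F" for E
  proof -
    have Em: "E \<in> sets M" using E by auto
    obtain a where a: "E = cb a (- int n)" using E by blast
    have fin: "emeasure M E < \<infinity>" using a emeasure_cb by simp
    have int1: "integrable M (\<lambda>x. indicator E x * f x)" by (rule L2_integrable_on[OF L Em fin])
    have int2: "integrable M (\<lambda>x. complex_of_real (indicator E x))"
      using Em fin by (intro integrable_of_real) auto
    have eq: "(\<lambda>x. indicator E x * ((f x - ?c E) * cnj (\<gamma> E))) =
        (\<lambda>x. cnj (\<gamma> E) * (indicator E x * f x) - (cnj (\<gamma> E) * ?c E) * complex_of_real (indicator E x))"
      by (auto simp: indicator_def algebra_simps)
    have sI: "(LINT z:E|M. f z) = integral\<^sup>L M (\<lambda>x. indicator E x * f x)"
      unfolding set_lebesgue_integral_def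
      by (intro Bochner_Integration.integral_cong refl) (auto simp: indicator_def)
    have mE: "measure M E = inverse (real q ^ n)"
      using a measure_cb by (simp add: R_def power_int_def power_inverse)
    have qn: "(real q ^ n) \<noteq> 0" using q_ge2 by simp
    define k where "k = cnj (\<gamma> E)"
    define I where "I = integral\<^sup>L M (\<lambda>x. indicator E x * f x)"
    have cE: "?c E = complex_of_real (real q ^ n) * I" unfolding I_def sI ..
    have iI: "integral\<^sup>L M (\<lambda>x. complex_of_real (indicator E x)) = complex_of_real (measure M E)"
      using Em by simp
    have "integral\<^sup>L M (\<lambda>x. k * (indicator E x * f x) - (k * ?c E) * complex_of_real (indicator E x))
        = integral\<^sup>L M (\<lambda>x. k * (indicator E x * f x)) - integral\<^sup>L M (\<lambda>x. (k * ?c E) * complex_of_real (indicator E x))"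
      by (rule Bochner_Integration.integral_diff)
         (auto intro: Bochner_Integration.integrable_mult_right int1 int2)
    also have "\<dots> = k * I - (k * ?c E) * complex_of_real (measure M E)"
      unfolding I_def iI[symmetric] by simp
    also have "\<dots> = k * I - k * (complex_of_real (real q ^ n) * complex_of_real (inverse (real q ^ n))) * I"
      unfolding cE mE by (simp add: algebra_simps)
    also have "complex_of_real (real q ^ n) * complex_of_real (inverse (real q ^ n)) = 1"
      using qn by (simp flip: of_real_mult)
    finally show ?thesis unfolding eq k_def by simp
  qed
  have "L2_inner M (\<lambda>x. f x - ?P x) g = integral\<^sup>L M (\<lambda>x. \<Sum>E\<in>?F. indicator E x * ((f x - ?c E) * cnj (\<gamma> E)))"
    unfolding L2_inner_def
  proof (rule integral_cong_AE)
    have Pm: "?P \<in> borel_measurable M" using P_in[OF L] by (simp add: Cspace_def L2_def)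
    show "(\<lambda>x. (f x - ?P x) * cnj (g x)) \<in> borel_measurable M" using Pm by measurable
    show "(\<lambda>x. \<Sum>E\<in>?F. indicator E x * ((f x - ?c E) * cnj (\<gamma> E))) \<in> borel_measurable M"
    proof (rule borel_measurable_sum)
      fix E assume "E \<in> ?F"
      hence [measurable]: "E \<in> sets M" by auto
      show "(\<lambda>x. indicator E x * ((f x - ?c E) * cnj (\<gamma> E))) \<in> borel_measurable M" by measurable
    qed
    show "AE x in M. (f x - ?P x) * cnj (g x) = (\<Sum>E\<in>?F. indicator E x * ((f x - ?c E) * cnj (\<gamma> E)))"
      by (rule ae)
  qed
  also have "\<dots> = (\<Sum>E\<in>?F. integral\<^sup>L M (\<lambda>x. indicator E x * ((f x - ?c E) * cnj (\<gamma> E))))"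
  proof (rule Bochner_Integration.integral_sum)
    fix E assume E: "E \<in> ?F"
    have Em: "E \<in> sets M" using E by auto
    obtain a where a: "E = cb a (- int n)" using E by blast
    have fin: "emeasure M E < \<infinity>" using a emeasure_cb by simp
    have int1: "integrable M (\<lambda>x. indicator E x * f x)" by (rule L2_integrable_on[OF L Em fin])
    have int2: "integrable M (\<lambda>x. complex_of_real (indicator E x))"
      using Em fin by (intro integrable_of_real) auto
    have eq: "(\<lambda>x. indicator E x * ((f x - ?c E) * cnj (\<gamma> E))) =
        (\<lambda>x. cnj (\<gamma> E) * (indicator E x * f x) - (cnj (\<gamma> E) * ?c E) * complex_of_real (indicator E x))"
      by (auto simp: indicator_def algebra_simps)
    show "integrable M (\<lambda>x. indicator E x * ((f x - ?c E) * cnj (\<gamma> E)))"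
      unfolding eq using int1 int2 by auto
  qed
  also have "\<dots> = 0" using term0 by simp
  finally show ?thesis .
qed

end

theorem mainTheorem4:
  fixes absv :: "'a::{field, metric_space} \<Rightarrow> real"
    and M :: "'a measure" and q :: nat and \<beta> :: 'a and n :: nat
  assumes "nonarch_local_field absv M q \<beta>"
    and "n \<ge> 1"
  shows "(\<forall>f. L2 M f \<longrightarrow>
            (AE x in M. Cop absv q n (Sop absv M q n f) x = Sop absv M q n (Cop absv q n f) x))
         \<and> is_orth_proj M (\<lambda>f. Cop absv q n (Sop absv M q n f))
               (Cspace absv M q n \<inter> Sspace absv M q n)"
proof -
  interpret nlf absv M q \<beta> by (rule nlf.intro) (rule assms(1))
  show ?thesis
  proof (intro conjI allI impI)
    fix f :: "'a \<Rightarrow> complex" assume "L2 M f"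
    show "AE x in M. Cop absv q n (Sop absv M q n f) x = Sop absv M q n (Cop absv q n f) x"
      by (intro AE_I2 commute)
  next
    show "is_orth_proj M (\<lambda>f. Cop absv q n (Sop absv M q n f)) (Cspace absv M q n \<inter> Sspace absv M q n)"
      unfolding is_orth_proj_def
    proof (intro allI impI conjI ballI)
      fix f g assume L: "L2 M f" and g: "g \<in> Cspace absv M q n \<inter> Sspace absv M q n"
      show "L2_inner M (\<lambda>x. f x - Cop absv q n (Sop absv M q n f) x) g = 0" by (rule orth[OF L g])
    next
      fix f :: "'a \<Rightarrow> complex" assume L: "L2 M f"
      show "Cop absv q n (Sop absv M q n f) \<in> Cspace absv M q n \<inter> Sspace absv M q n" by (rule P_in[OF L])
    qed
  qed
qed

end
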